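(* Assume the Lipschitz gradient assumption, $r_1>L_x$, $r_2>L_y$, and let $\{(x^t,y^t,z^t,v^t)\}$ be generated by DS-GDA with stepsizes $c,\alpha>0$ and $\beta,\mu\in(0,1)$. Then for every $t\ge0$: (i) $\|x^{t+1}-x(y^t,z^t,v^t)\|\le\sigma_6\|x^{t+1}-x^t\|$; (ii) $\|y^{t+1}-y(x^{t+1},z^t,v^t)\|\le\sigma_7\|y^{t+1}-y^t\|$; (iii) $\|y(z^t,v^t)-y^t\|\le\sigma_8\|y^t-y^t_+(z^t,v^t)\|$; (iv) $\|y^{t+1}-y^t_+(z^t,v^t)\|\le L_y\alpha\sigma_6\|x^t-x^{t+1}\|$, where $\sigma_6=\frac{2cr_1+1}{cr_1-cL_x}$, $\sigma_7=\frac{2\alpha r_2+1}{\alpha r_2-\alpha L_y}$, $\sigma_8=\frac{1+\alpha L_d}{\alpha(r_2-L_y)}$, $L_d=L_y\sigma_1+L_y+r_2$, $\sigma_1=\frac{L_y+r_1-L_x}{r_1-L_x}$.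
   Context: Let $\mathcal X\subset\mathbb R^n$, $\mathcal Y\subset\mathbb R^d$ be nonempty convex compact sets and $f:\mathbb R^n\times\mathbb R^d\to\mathbb R$ continuously differentiable. Lipschitz gradient assumption: there are $L_x,L_y>0$ such that for all $x,x'\in\mathcal X$, $y,y'\in\mathcal Y$, $\|\nabla_x f(x,y)-\nabla_x f(x',y')\|\le L_x(\|x-x'\|+\|y-y'\|)$ and $\|\nabla_y f(x,y)-\nabla_y f(x',y')\|\le L_y(\|x-x'\|+\|y-y'\|)$. $F(x,y,z,v)=f(x,y)+\frac{r_1}{2}\|x-z\|^2-\frac{r_2}{2}\|y-v\|^2$; $d(y,z,v)=\min_{x\in\mathcal X}F$ with unique minimizer $x(y,z,v)$; $h(x,z,v)=\max_{y\in\mathcal Y}F$ with unique maximizer $y(x,z,v)$; $y(z,v)=\arg\max_{y\in\mathcal Y}d(y,z,v)$. DS-GDA: given $x^0,y^0,z^0,v^0$, for $t\ge0$: $x^{t+1}=\mathrm{proj}_{\mathcal X}(x^t-c\nabla_xF(x^t,y^t,z^t,v^t))$; $y^{t+1}=\mathrm{proj}_{\mathcal Y}(y^t+\alpha\nabla_yF(x^{t+1},y^t,z^t,v^t))$; $z^{t+1}=z^t+\beta(x^{t+1}-z^t)$; $v^{t+1}=v^t+\mu(y^{t+1}-v^t)$. Also $y^t_+(z^t,v^t)=\mathrm{proj}_{\mathcal Y}(y^t+\alpha\nabla_yF(x(y^t,z^t,v^t),y^t,z^t,v^t))$. *)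

theory Defs
  imports "HOL-Analysis.Analysis"
begin

definition FF :: "('a::euclidean_space \<Rightarrow> 'b::euclidean_space \<Rightarrow> real) \<Rightarrow> real \<Rightarrow> real
    \<Rightarrow> 'a \<Rightarrow> 'b \<Rightarrow> 'a \<Rightarrow> 'b \<Rightarrow> real" where
  "FF f r1 r2 x y z v = f x y + r1 / 2 * (norm (x - z))\<^sup>2 - r2 / 2 * (norm (y - v))\<^sup>2"

definition xopt :: "('a::euclidean_space \<Rightarrow> 'b::euclidean_space \<Rightarrow> real) \<Rightarrow> real \<Rightarrow> real
    \<Rightarrow> 'a set \<Rightarrow> 'b \<Rightarrow> 'a \<Rightarrow> 'b \<Rightarrow> 'a" where
  "xopt f r1 r2 X y z v =
     (THE x. x \<in> X \<and> (\<forall>x'\<in>X. FF f r1 r2 x y z v \<le> FF f r1 r2 x' y z v))"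

definition yopt :: "('a::euclidean_space \<Rightarrow> 'b::euclidean_space \<Rightarrow> real) \<Rightarrow> real \<Rightarrow> real
    \<Rightarrow> 'b set \<Rightarrow> 'a \<Rightarrow> 'a \<Rightarrow> 'b \<Rightarrow> 'b" where
  "yopt f r1 r2 Y x z v =
     (THE y. y \<in> Y \<and> (\<forall>y'\<in>Y. FF f r1 r2 x y' z v \<le> FF f r1 r2 x y z v))"

definition dfun :: "('a::euclidean_space \<Rightarrow> 'b::euclidean_space \<Rightarrow> real) \<Rightarrow> real \<Rightarrow> real
    \<Rightarrow> 'a set \<Rightarrow> 'b \<Rightarrow> 'a \<Rightarrow> 'b \<Rightarrow> real" where
  "dfun f r1 r2 X y z v = (INF x\<in>X. FF f r1 r2 x y z v)"

definition yzv :: "('a::euclidean_space \<Rightarrow> 'b::euclidean_space \<Rightarrow> real) \<Rightarrow> real \<Rightarrow> real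
    \<Rightarrow> 'a set \<Rightarrow> 'b set \<Rightarrow> 'a \<Rightarrow> 'b \<Rightarrow> 'b" where
  "yzv f r1 r2 X Y z v =
     (THE y. y \<in> Y \<and> (\<forall>y'\<in>Y. dfun f r1 r2 X y' z v \<le> dfun f r1 r2 X y z v))"

end

theory Submission imports Defs begin

lemma core1D:
  fixes p p' :: "real \<Rightarrow> real"
  assumes d: "\<And>s. (p has_real_derivative p' s) (at s)"
    and b: "\<And>s. 0 \<le> s \<Longrightarrow> s \<le> 1 \<Longrightarrow> p' s \<le> K * s + M"
  shows "p 1 - p 0 \<le> K/2 + M"
proof -
  define q where "q s = p s - K/2 * s^2 - M * s" for s
  have "q 1 \<le> q 0"
  proof (rule DERIV_nonpos_imp_nonincreasing[of 0 1 q])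
    fix x :: real assume x: "0 \<le> x" "x \<le> 1"
    have "(q has_real_derivative (p' x - K/2*(2*x) - M)) (at x)"
      unfolding q_def[abs_def] by (rule derivative_eq_intros d refl | simp)+
    moreover have "p' x - K/2*(2*x) - M \<le> 0" using b[OF x] by simp
    ultimately show "\<exists>y. (q has_real_derivative y) (at x) \<and> y \<le> 0" by blast
  qed simp
  then show ?thesis unfolding q_def by simp
qed

lemma descent:
  fixes \<phi> :: "'a::euclidean_space \<Rightarrow> real" and g :: "'a \<Rightarrow> 'a"
  assumes d: "\<And>p. (\<phi> has_derivative (\<lambda>h. g p \<bullet> h)) (at p)"
    and S: "convex S" "u \<in> S" "w \<in> S"
    and L: "\<And>p q. p \<in> S \<Longrightarrow> q \<in> S \<Longrightarrow> norm (g p - g q) \<le> L * norm (p - q)"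
  shows "\<phi> w \<le> \<phi> u + g u \<bullet> (w - u) + L/2 * (norm (w - u))^2"
    and "\<phi> w \<ge> \<phi> u + g u \<bullet> (w - u) - L/2 * (norm (w - u))^2"
proof -
  define h where "h = w - u"
  define p where "p s = \<phi> (u + s *\<^sub>R h)" for s
  have pd: "(p has_real_derivative (g (u + s *\<^sub>R h) \<bullet> h)) (at s)" for s
  proof -
    have "((\<lambda>s. u + s *\<^sub>R h) has_derivative (\<lambda>t. t *\<^sub>R h)) (at s)"
      by (rule derivative_eq_intros refl)+ simp
    from has_derivative_compose[OF this d]
    have "(p has_derivative (\<lambda>t. g (u + s *\<^sub>R h) \<bullet> (t *\<^sub>R h))) (at s)"
      unfolding p_def[abs_def] o_def by simp
    moreover have "(\<lambda>t. g (u + s *\<^sub>R h) \<bullet> (t *\<^sub>R h)) = (*) (g (u + s *\<^sub>R h) \<bullet> h)"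
      by (auto simp: inner_scaleR_right)
    ultimately show ?thesis unfolding has_field_derivative_def by simp
  qed
  have mem: "u + s *\<^sub>R h \<in> S" if "0 \<le> s" "s \<le> 1" for s
  proof -
    have "u + s *\<^sub>R h = (1 - s) *\<^sub>R u + s *\<^sub>R w" unfolding h_def by (simp add: algebra_simps)
    then show ?thesis using S that convexD[OF S(1) S(2) S(3), of "1-s" s] by simp
  qed
  have bnd: "\<bar>g (u + s *\<^sub>R h) \<bullet> h - g u \<bullet> h\<bar> \<le> (L * (norm h)^2) * s" if "0 \<le> s" "s \<le> 1" for s
  proof -
    have "\<bar>g (u + s *\<^sub>R h) \<bullet> h - g u \<bullet> h\<bar> = \<bar>(g (u + s *\<^sub>R h) - g u) \<bullet> h\<bar>"
      by (simp add: inner_diff_left)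
    also have "\<dots> \<le> norm (g (u + s *\<^sub>R h) - g u) * norm h" by (rule Cauchy_Schwarz_ineq2)
    also have "\<dots> \<le> (L * norm ((u + s *\<^sub>R h) - u)) * norm h"
      by (rule mult_right_mono[OF L[OF mem[OF that] S(2)]]) simp
    also have "\<dots> = (L * (norm h)^2) * s" using that by (simp add: power2_eq_square)
    finally show ?thesis .
  qed
  have "p 1 - p 0 \<le> (L * (norm h)^2)/2 + g u \<bullet> h"
    by (rule core1D[OF pd]) (use bnd in \<open>force simp: abs_le_iff\<close>)
  then show "\<phi> w \<le> \<phi> u + g u \<bullet> (w - u) + L/2 * (norm (w - u))^2"
    unfolding p_def h_def by simp
  have pd': "((\<lambda>s. - p s) has_real_derivative (- (g (u + s *\<^sub>R h) \<bullet> h))) (at s)" for s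
    by (rule derivative_eq_intros pd refl)+
  have "(\<lambda>s. - p s) 1 - (\<lambda>s. - p s) 0 \<le> (L * (norm h)^2)/2 + (- (g u \<bullet> h))"
  proof (rule core1D[OF pd'])
    fix s :: real assume "0 \<le> s" "s \<le> 1"
    then show "- (g (u + s *\<^sub>R h) \<bullet> h) \<le> L * (norm h)\<^sup>2 * s + - (g u \<bullet> h)"
      using bnd[of s] by (simp add: abs_le_iff)
  qed
  then show "\<phi> w \<ge> \<phi> u + g u \<bullet> (w - u) - L/2 * (norm (w - u))^2"
    unfolding p_def h_def by simp
qed

lemma first_order:
  fixes a C :: real
  assumes "\<And>s. 0 < s \<Longrightarrow> s \<le> 1 \<Longrightarrow> 0 \<le> s * a + C * s^2"
  shows "0 \<le> a"
proof (rule ccontr)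
  assume "\<not> 0 \<le> a" then have a: "a < 0" by simp
  define s where "s = min 1 (- a / (2 * \<bar>C\<bar> + 1))"
  have s0: "0 < s" using a unfolding s_def by (simp add: divide_neg_pos add_pos_nonneg)
  have s1: "s \<le> 1" unfolding s_def by simp
  have s2: "s \<le> - a / (2 * \<bar>C\<bar> + 1)" unfolding s_def by simp
  have "0 \<le> s * (a + C * s)" using assms[OF s0 s1] by (simp add: algebra_simps power2_eq_square)
  then have "0 \<le> a + C * s" using s0 by (simp add: zero_le_mult_iff)
  moreover have "C * s \<le> \<bar>C\<bar> * s" using s0 by (simp add: mult_right_mono)
  moreover have "\<bar>C\<bar> * s \<le> \<bar>C\<bar> * (- a / (2 * \<bar>C\<bar> + 1))" using mult_left_mono[OF s2, of "\<bar>C\<bar>"] by simp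
  moreover have "\<bar>C\<bar> * (- a / (2 * \<bar>C\<bar> + 1)) < - a"
  proof -
    have "\<bar>C\<bar> * (- a) < (2 * \<bar>C\<bar> + 1) * (- a)" using a by (simp add: mult_strict_right_mono)
    have pos: "0 < 2 * \<bar>C\<bar> + 1" by simp
    have "\<bar>C\<bar> * (- a / (2 * \<bar>C\<bar> + 1)) = (\<bar>C\<bar> * (- a)) / (2 * \<bar>C\<bar> + 1)" by simp
    also have "\<dots> < - a" apply (subst pos_divide_less_eq[OF pos])
      using \<open>\<bar>C\<bar> * (- a) < (2 * \<bar>C\<bar> + 1) * (- a)\<close> by (metis mult.commute)
    finally show ?thesis .
  qed
  ultimately show False by linarith
qed

lemma EB:
  fixes H :: "'a::euclidean_space \<Rightarrow> 'a"
  assumes S: "convex S" "closed S"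
    and ps: "ps \<in> S" and opt: "\<And>q. q \<in> S \<Longrightarrow> H ps \<bullet> (q - ps) \<ge> 0"
    and p: "p \<in> S" and c: "c > 0" and m: "m > 0" and L0: "L \<ge> 0"
    and mono: "\<And>a b. a \<in> S \<Longrightarrow> b \<in> S \<Longrightarrow> (H a - H b) \<bullet> (a - b) \<ge> m * (norm (a - b))^2"
    and lip: "\<And>a b. a \<in> S \<Longrightarrow> b \<in> S \<Longrightarrow> norm (H a - H b) \<le> L * norm (a - b)"
    and pp: "pp = closest_point S (p - c *\<^sub>R H p)"
  shows "norm (pp - ps) \<le> (c * L + 1) / (c * m) * norm (pp - p)"
    and "norm (ps - p) \<le> (1 + c * L) / (c * m) * norm (p - pp)"
proof -
  have Sne: "S \<noteq> {}" using ps by auto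
  have ppS: "pp \<in> S" unfolding pp using closest_point_in_set[OF S(2) Sne] .
  have proj: "(p - c *\<^sub>R H p - pp) \<bullet> (ps - pp) \<le> 0"
    unfolding pp by (rule closest_point_dot[OF S ps])
  then have proj': "c * (H p \<bullet> (pp - ps)) \<le> (p - pp) \<bullet> (pp - ps)"
    by (simp add: inner_diff_left inner_diff_right inner_commute algebra_simps)
  define e where "e = norm (pp - ps)"
  define dl where "dl = norm (pp - p)"
  have dl': "norm (p - pp) = dl" unfolding dl_def by (simp add: norm_minus_commute)
  have cs1: "(p - pp) \<bullet> (pp - ps) \<le> dl * e"
    using Cauchy_Schwarz_ineq2[of "p - pp" "pp - ps"] dl' e_def by (simp add: abs_le_iff)
  have cs2: "(H pp - H p) \<bullet> (pp - ps) \<le> (L * dl) * e"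
  proof -
    have "(H pp - H p) \<bullet> (pp - ps) \<le> norm (H pp - H p) * e"
      using Cauchy_Schwarz_ineq2[of "H pp - H p" "pp - ps"] e_def by (simp add: abs_le_iff)
    also have "\<dots> \<le> (L * dl) * e" unfolding dl_def
      by (rule mult_right_mono[OF lip[OF ppS p]]) (simp add: e_def)
    finally show ?thesis .
  qed
  have "m * e^2 \<le> (H pp - H ps) \<bullet> (pp - ps)" using mono[OF ppS ps] e_def by simp
  also have "\<dots> \<le> H pp \<bullet> (pp - ps)" using opt[OF ppS] by (simp add: inner_diff_left)
  also have "\<dots> = (H pp - H p) \<bullet> (pp - ps) + H p \<bullet> (pp - ps)" by (simp add: inner_diff_left)
  finally have "c * (m * e^2) \<le> c * ((H pp - H p) \<bullet> (pp - ps)) + c * (H p \<bullet> (pp - ps))"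
    using c by (simp add: distrib_left[symmetric] mult_left_mono)
  also have "\<dots> \<le> c * ((L * dl) * e) + dl * e" using cs2 proj' cs1 c
    by (smt (verit) mult_left_mono)
  finally have key: "e * (c * m * e) \<le> e * ((c * L + 1) * dl)" by (simp add: algebra_simps power2_eq_square)
  have cme: "c * m * e \<le> (c * L + 1) * dl"
  proof (cases "e = 0")
    case True
    then show ?thesis using c L0 by (simp add: dl_def)
  next
    case False
    then have "e > 0" unfolding e_def by simp
    then show ?thesis using key by simp
  qed
  show "norm (pp - ps) \<le> (c * L + 1) / (c * m) * norm (pp - p)"
    using cme c m unfolding e_def dl_def by (simp add: pos_le_divide_eq mult.commute mult.left_commute)
  define f where "f = norm (ps - p)"
  have fpos: "f \<ge> 0" unfolding f_def by simp
  have "m * f^2 \<le> (H p - H ps) \<bullet> (p - ps)" using mono[OF p ps] f_def by (simp add: norm_minus_commute)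
  also have "\<dots> = (H p - H ps) \<bullet> (pp - ps) + (H p - H ps) \<bullet> (p - pp)"
    by (simp add: inner_diff_right)
  also have "\<dots> \<le> H p \<bullet> (pp - ps) + (H p - H ps) \<bullet> (p - pp)"
    using opt[OF ppS] by (simp add: inner_diff_left)
  finally have A: "c * (m * f^2) \<le> c * (H p \<bullet> (pp - ps)) + c * ((H p - H ps) \<bullet> (p - pp))"
    using c by (simp add: distrib_left[symmetric] mult_left_mono)
  have B: "(H p - H ps) \<bullet> (p - pp) \<le> (L * f) * dl"
  proof -
    have "(H p - H ps) \<bullet> (p - pp) \<le> norm (H p - H ps) * dl"
      using Cauchy_Schwarz_ineq2[of "H p - H ps" "p - pp"] dl' by (simp add: abs_le_iff)
    also have "\<dots> \<le> (L * f) * dl" unfolding f_def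
      using mult_right_mono[OF lip[OF p ps], of dl] by (simp add: dl_def norm_minus_commute)
    finally show ?thesis .
  qed
  have C: "(p - pp) \<bullet> (pp - ps) = (p - pp) \<bullet> (p - ps) - dl^2"
  proof -
    have "pp - ps = (p - ps) - (p - pp)" by simp
    then have "(p - pp) \<bullet> (pp - ps) = (p - pp) \<bullet> (p - ps) - (p - pp) \<bullet> (p - pp)"
      by (simp add: inner_diff_right)
    then show ?thesis using dl' by (simp add: power2_norm_eq_inner[symmetric])
  qed
  have D: "(p - pp) \<bullet> (p - ps) \<le> dl * f"
    using Cauchy_Schwarz_ineq2[of "p - pp" "p - ps"] dl' f_def by (simp add: abs_le_iff norm_minus_commute)
  have "c * (m * f^2) \<le> dl * f - dl^2 + c * ((L * f) * dl)"
    using A B C D proj' c by (smt (verit) mult_left_mono)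
  also have "\<dots> \<le> dl * f + c * ((L * f) * dl)" by simp
  finally have key2: "f * (c * m * f) \<le> f * ((1 + c * L) * dl)" by (simp add: algebra_simps power2_eq_square)
  have cmf: "c * m * f \<le> (1 + c * L) * dl"
  proof (cases "f = 0")
    case True
    then show ?thesis using c L0 by (simp add: dl_def)
  next
    case False
    then have "f > 0" using fpos by simp
    then show ?thesis using key2 by simp
  qed
  show "norm (ps - p) \<le> (1 + c * L) / (c * m) * norm (p - pp)"
    using cmf c m dl' unfolding f_def by (simp add: pos_le_divide_eq mult.commute mult.left_commute)
qed

lemma mvt_bound:
  fixes \<phi> :: "'a::euclidean_space \<Rightarrow> real" and g :: "'a \<Rightarrow> 'a"
  assumes d: "\<And>p. (\<phi> has_derivative (\<lambda>h. g p \<bullet> h)) (at p)"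
    and S: "convex S" "u \<in> S" "w \<in> S"
    and B: "\<And>p. p \<in> S \<Longrightarrow> norm (g p) \<le> B"
  shows "\<phi> w - \<phi> u \<le> B * norm (w - u)"
proof -
  define h where "h = w - u"
  define p where "p s = \<phi> (u + s *\<^sub>R h)" for s
  have pd: "(p has_real_derivative (g (u + s *\<^sub>R h) \<bullet> h)) (at s)" for s
  proof -
    have "((\<lambda>s. u + s *\<^sub>R h) has_derivative (\<lambda>t. t *\<^sub>R h)) (at s)"
      by (rule derivative_eq_intros refl)+ simp
    from has_derivative_compose[OF this d]
    have "(p has_derivative (\<lambda>t. g (u + s *\<^sub>R h) \<bullet> (t *\<^sub>R h))) (at s)"
      unfolding p_def[abs_def] o_def by simp
    moreover have "(\<lambda>t. g (u + s *\<^sub>R h) \<bullet> (t *\<^sub>R h)) = (*) (g (u + s *\<^sub>R h) \<bullet> h)"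
      by (auto simp: inner_scaleR_right)
    ultimately show ?thesis unfolding has_field_derivative_def by simp
  qed
  have mem: "u + s *\<^sub>R h \<in> S" if "0 \<le> s" "s \<le> 1" for s
  proof -
    have "u + s *\<^sub>R h = (1 - s) *\<^sub>R u + s *\<^sub>R w" unfolding h_def by (simp add: algebra_simps)
    then show ?thesis using S that convexD[OF S(1) S(2) S(3), of "1-s" s] by simp
  qed
  have "p 1 - p 0 \<le> 0/2 + B * norm h"
  proof (rule core1D[OF pd])
    fix s :: real assume s: "0 \<le> s" "s \<le> 1"
    have "g (u + s *\<^sub>R h) \<bullet> h \<le> norm (g (u + s *\<^sub>R h)) * norm h"
      using Cauchy_Schwarz_ineq2[of "g (u + s *\<^sub>R h)" h] by (simp add: abs_le_iff)
    also have "\<dots> \<le> B * norm h" by (rule mult_right_mono[OF B[OF mem[OF s]]]) simp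
    finally show "g (u + s *\<^sub>R h) \<bullet> h \<le> 0 * s + B * norm h" by simp
  qed
  then show ?thesis unfolding p_def h_def by simp
qed

lemma norm_add_sq:
  fixes a b :: "'a::real_inner"
  shows "(norm (a + b))^2 = (norm a)^2 + 2 * (a \<bullet> b) + (norm b)^2"
  by (simp add: power2_norm_eq_inner inner_add_left inner_add_right inner_commute)

definition "Fx gx r1 x y z = gx x y + r1 *\<^sub>R (x - z)"
definition "Fy gy r2 x y v = gy x y - r2 *\<^sub>R (y - v)"

locale setting =
  fixes f :: "'a::euclidean_space \<Rightarrow> 'b::euclidean_space \<Rightarrow> real"
    and gx :: "'a \<Rightarrow> 'b \<Rightarrow> 'a" and gy :: "'a \<Rightarrow> 'b \<Rightarrow> 'b"
    and X :: "'a set" and Y :: "'b set"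
    and Lx Ly r1 r2 :: real
  assumes X: "X \<noteq> {}" "convex X" "compact X"
    and Y: "Y \<noteq> {}" "convex Y" "compact Y"
    and grad: "\<And>a b. ((\<lambda>p. f (fst p) (snd p)) has_derivative
                  (\<lambda>h. gx a b \<bullet> fst h + gy a b \<bullet> snd h)) (at (a, b))"
    and Lpos: "Lx > 0" "Ly > 0"
    and Lip_x: "\<And>a a' b b'. a \<in> X \<Longrightarrow> a' \<in> X \<Longrightarrow> b \<in> Y \<Longrightarrow> b' \<in> Y \<Longrightarrow>
                 norm (gx a b - gx a' b') \<le> Lx * (norm (a - a') + norm (b - b'))"
    and Lip_y: "\<And>a a' b b'. a \<in> X \<Longrightarrow> a' \<in> X \<Longrightarrow> b \<in> Y \<Longrightarrow> b' \<in> Y \<Longrightarrow>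
                 norm (gy a b - gy a' b') \<le> Ly * (norm (a - a') + norm (b - b'))"
    and r: "r1 > Lx" "r2 > Ly"
begin

lemma dx: "((\<lambda>x. f x y) has_derivative (\<lambda>h. gx x y \<bullet> h)) (at x)"
proof -
  have "((\<lambda>x. (x, y)) has_derivative (\<lambda>h. (h, 0))) (at x)"
    by (rule derivative_eq_intros refl)+
  from has_derivative_compose[OF this grad[of x y]] show ?thesis by (simp add: o_def)
qed

lemma dy: "((\<lambda>y. f x y) has_derivative (\<lambda>h. gy x y \<bullet> h)) (at y)"
proof -
  have "((\<lambda>y. (x, y)) has_derivative (\<lambda>h. (0, h))) (at y)"
    by (rule derivative_eq_intros refl)+
  from has_derivative_compose[OF this grad[of x y]] show ?thesis by (simp add: o_def)
qed

lemma fcont: "continuous_on UNIV (\<lambda>p. f (fst p) (snd p))"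
proof -
  have "continuous (at p) (\<lambda>p. f (fst p) (snd p))" for p
    using has_derivative_continuous[OF grad[of "fst p" "snd p"]] by simp
  then show ?thesis by (simp add: continuous_at_imp_continuous_on)
qed

lemma fx_desc:
  assumes "x \<in> X" "x' \<in> X" "y \<in> Y"
  shows "f x' y \<le> f x y + gx x y \<bullet> (x' - x) + Lx/2 * (norm (x' - x))^2"
    and "f x' y \<ge> f x y + gx x y \<bullet> (x' - x) - Lx/2 * (norm (x' - x))^2"
proof -
  have L: "norm (gx p y - gx q y) \<le> Lx * norm (p - q)" if "p \<in> X" "q \<in> X" for p q
    using Lip_x[OF that assms(3) assms(3)] by simp
  show "f x' y \<le> f x y + gx x y \<bullet> (x' - x) + Lx/2 * (norm (x' - x))^2"
    by (rule descent(1)[where \<phi>="\<lambda>x. f x y" and g="\<lambda>x. gx x y", OF dx X(2) assms(1,2) L])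
  show "f x' y \<ge> f x y + gx x y \<bullet> (x' - x) - Lx/2 * (norm (x' - x))^2"
    by (rule descent(2)[where \<phi>="\<lambda>x. f x y" and g="\<lambda>x. gx x y", OF dx X(2) assms(1,2) L])
qed

lemma fy_desc:
  assumes "x \<in> X" "y \<in> Y" "y' \<in> Y"
  shows "f x y' \<le> f x y + gy x y \<bullet> (y' - y) + Ly/2 * (norm (y' - y))^2"
    and "f x y' \<ge> f x y + gy x y \<bullet> (y' - y) - Ly/2 * (norm (y' - y))^2"
proof -
  have L: "norm (gy x p - gy x q) \<le> Ly * norm (p - q)" if "p \<in> Y" "q \<in> Y" for p q
    using Lip_y[OF assms(1) assms(1) that] by simp
  show "f x y' \<le> f x y + gy x y \<bullet> (y' - y) + Ly/2 * (norm (y' - y))^2"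
    by (rule descent(1)[where \<phi>="\<lambda>y. f x y" and g="\<lambda>y. gy x y", OF dy Y(2) assms(2,3) L])
  show "f x y' \<ge> f x y + gy x y \<bullet> (y' - y) - Ly/2 * (norm (y' - y))^2"
    by (rule descent(2)[where \<phi>="\<lambda>y. f x y" and g="\<lambda>y. gy x y", OF dy Y(2) assms(2,3) L])
qed

lemma FFx:
  assumes "x \<in> X" "x' \<in> X" "y \<in> Y"
  shows "FF f r1 r2 x' y z v \<le> FF f r1 r2 x y z v + Fx gx r1 x y z \<bullet> (x' - x) + (r1 + Lx)/2 * (norm (x' - x))^2"
    and "FF f r1 r2 x' y z v \<ge> FF f r1 r2 x y z v + Fx gx r1 x y z \<bullet> (x' - x) + (r1 - Lx)/2 * (norm (x' - x))^2"
proof -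
  have e: "(norm (x' - z))^2 = (norm (x - z))^2 + 2 * ((x - z) \<bullet> (x' - x)) + (norm (x' - x))^2"
    using norm_add_sq[of "x - z" "x' - x"] by simp
  show "FF f r1 r2 x' y z v \<le> FF f r1 r2 x y z v + Fx gx r1 x y z \<bullet> (x' - x) + (r1 + Lx)/2 * (norm (x' - x))^2"
    using fx_desc(1)[OF assms] unfolding FF_def Fx_def e
    by (simp add: inner_add_left algebra_simps add_divide_distrib diff_divide_distrib)
  show "FF f r1 r2 x' y z v \<ge> FF f r1 r2 x y z v + Fx gx r1 x y z \<bullet> (x' - x) + (r1 - Lx)/2 * (norm (x' - x))^2"
    using fx_desc(2)[OF assms] unfolding FF_def Fx_def e
    by (simp add: inner_add_left algebra_simps add_divide_distrib diff_divide_distrib)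
qed

lemma FFy:
  assumes "x \<in> X" "y \<in> Y" "y' \<in> Y"
  shows "FF f r1 r2 x y' z v \<le> FF f r1 r2 x y z v + Fy gy r2 x y v \<bullet> (y' - y) - (r2 - Ly)/2 * (norm (y' - y))^2"
    and "FF f r1 r2 x y' z v \<ge> FF f r1 r2 x y z v + Fy gy r2 x y v \<bullet> (y' - y) - (r2 + Ly)/2 * (norm (y' - y))^2"
proof -
  have e: "(norm (y' - v))^2 = (norm (y - v))^2 + 2 * ((y - v) \<bullet> (y' - y)) + (norm (y' - y))^2"
    using norm_add_sq[of "y - v" "y' - y"] by simp
  show "FF f r1 r2 x y' z v \<le> FF f r1 r2 x y z v + Fy gy r2 x y v \<bullet> (y' - y) - (r2 - Ly)/2 * (norm (y' - y))^2"
    using fy_desc(1)[OF assms] unfolding FF_def Fy_def e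
    by (simp add: inner_diff_left algebra_simps add_divide_distrib diff_divide_distrib)
  show "FF f r1 r2 x y' z v \<ge> FF f r1 r2 x y z v + Fy gy r2 x y v \<bullet> (y' - y) - (r2 + Ly)/2 * (norm (y' - y))^2"
    using fy_desc(2)[OF assms] unfolding FF_def Fy_def e
    by (simp add: inner_diff_left algebra_simps add_divide_distrib diff_divide_distrib)
qed

lemma seg_mem:
  assumes "convex S" "a \<in> S" "q \<in> S" "0 \<le> s" "s \<le> 1"
  shows "a + s *\<^sub>R (q - a) \<in> S"
proof -
  have "a + s *\<^sub>R (q - a) = (1 - s) *\<^sub>R a + s *\<^sub>R q" by (simp add: algebra_simps)
  then show ?thesis using convexD[OF assms(1-3), of "1-s" s] assms(4,5) by simp
qed

lemma min_FO_x:
  assumes y: "y \<in> Y" and a: "a \<in> X" and m: "\<forall>x'\<in>X. FF f r1 r2 a y z v \<le> FF f r1 r2 x' y z v"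
    and q: "q \<in> X"
  shows "0 \<le> Fx gx r1 a y z \<bullet> (q - a)"
proof (rule first_order[where C = "(r1 + Lx)/2 * (norm (q - a))^2"])
  fix s :: real assume s: "0 < s" "s \<le> 1"
  have mem: "a + s *\<^sub>R (q - a) \<in> X" using seg_mem[OF X(2) a q] s by simp
  have "FF f r1 r2 a y z v \<le> FF f r1 r2 (a + s *\<^sub>R (q - a)) y z v" using m mem by blast
  also have "\<dots> \<le> FF f r1 r2 a y z v + Fx gx r1 a y z \<bullet> (s *\<^sub>R (q - a)) + (r1 + Lx)/2 * (norm (s *\<^sub>R (q - a)))^2"
    using FFx(1)[OF a mem y, of z v] by simp
  also have "\<dots> = FF f r1 r2 a y z v + s * (Fx gx r1 a y z \<bullet> (q - a)) + (r1 + Lx)/2 * (s^2 * (norm (q - a))^2)"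
    using s by (simp add: power_mult_distrib)
  finally have "0 \<le> s * (Fx gx r1 a y z \<bullet> (q - a)) + (r1 + Lx)/2 * (s^2 * (norm (q - a))^2)" by simp
  then show "0 \<le> s * (Fx gx r1 a y z \<bullet> (q - a)) + (r1 + Lx) / 2 * (norm (q - a))\<^sup>2 * s\<^sup>2"
    by (simp add: mult_ac)
qed

lemma max_FO_y:
  assumes x: "x \<in> X" and a: "a \<in> Y" and m: "\<forall>y'\<in>Y. FF f r1 r2 x y' z v \<le> FF f r1 r2 x a z v"
    and q: "q \<in> Y"
  shows "Fy gy r2 x a v \<bullet> (q - a) \<le> 0"
proof -
  have "0 \<le> - (Fy gy r2 x a v \<bullet> (q - a))"
  proof (rule first_order[where C = "(r2 + Ly)/2 * (norm (q - a))^2"])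
    fix s :: real assume s: "0 < s" "s \<le> 1"
    have mem: "a + s *\<^sub>R (q - a) \<in> Y" using seg_mem[OF Y(2) a q] s by simp
    have A: "FF f r1 r2 x a z v \<ge> FF f r1 r2 x (a + s *\<^sub>R (q - a)) z v" using m mem by blast
    have B: "FF f r1 r2 x (a + s *\<^sub>R (q - a)) z v \<ge> FF f r1 r2 x a z v + Fy gy r2 x a v \<bullet> (s *\<^sub>R (q - a)) - (r2 + Ly)/2 * (norm (s *\<^sub>R (q - a)))^2"
      using FFy(2)[OF x a mem, of z v] by simp
    have C: "Fy gy r2 x a v \<bullet> (s *\<^sub>R (q - a)) - (r2 + Ly)/2 * (norm (s *\<^sub>R (q - a)))^2
        = s * (Fy gy r2 x a v \<bullet> (q - a)) - (r2 + Ly)/2 * (s^2 * (norm (q - a))^2)"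
      using s by (simp add: power_mult_distrib)
    have "0 \<le> s * - (Fy gy r2 x a v \<bullet> (q - a)) + (r2 + Ly)/2 * (s^2 * (norm (q - a))^2)" using A B C by linarith
    then show "0 \<le> s * - (Fy gy r2 x a v \<bullet> (q - a)) + (r2 + Ly) / 2 * (norm (q - a))\<^sup>2 * s\<^sup>2"
      by (simp add: mult_ac)
  qed
  then show ?thesis by simp
qed

lemma FF_cont_x: "continuous_on X (\<lambda>x. FF f r1 r2 x y z v)"
proof -
  have c1: "continuous_on X (\<lambda>x. (\<lambda>p. f (fst p) (snd p)) (x, y))"
    by (rule continuous_on_compose2[OF fcont continuous_on_Pair[OF continuous_on_id continuous_on_const]]) simp
  have c2: "continuous_on X (\<lambda>x. f x y)" using c1 by simp
  show ?thesis unfolding FF_def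
    by (intro continuous_on_diff continuous_on_add continuous_on_mult continuous_on_const c2
        continuous_on_power continuous_on_norm continuous_on_id)
qed

lemma FF_cont_y: "continuous_on Y (\<lambda>y. FF f r1 r2 x y z v)"
proof -
  have c1: "continuous_on Y (\<lambda>y. (\<lambda>p. f (fst p) (snd p)) (x, y))"
    by (rule continuous_on_compose2[OF fcont continuous_on_Pair[OF continuous_on_const continuous_on_id]]) simp
  have c2: "continuous_on Y (\<lambda>y. f x y)" using c1 by simp
  show ?thesis unfolding FF_def
    by (intro continuous_on_diff continuous_on_add continuous_on_mult continuous_on_const c2
        continuous_on_power continuous_on_norm continuous_on_id)
qed

lemma xopt_spec:
  assumes y: "y \<in> Y"
  shows "xopt f r1 r2 X y z v \<in> X \<and> (\<forall>x'\<in>X. FF f r1 r2 (xopt f r1 r2 X y z v) y z v \<le> FF f r1 r2 x' y z v)"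
proof -
  let ?P = "\<lambda>x. x \<in> X \<and> (\<forall>x'\<in>X. FF f r1 r2 x y z v \<le> FF f r1 r2 x' y z v)"
  obtain a where a: "?P a" using continuous_attains_inf[OF X(3) X(1) FF_cont_x] by blast
  have uniq: "b = a" if b: "?P b" for b
  proof -
    have "FF f r1 r2 b y z v \<ge> FF f r1 r2 a y z v + Fx gx r1 a y z \<bullet> (b - a) + (r1 - Lx)/2 * (norm (b - a))^2"
      by (rule FFx(2)) (use a b y in simp_all)
    moreover have "0 \<le> Fx gx r1 a y z \<bullet> (b - a)" using min_FO_x[OF y, of a z v b] a b by blast
    moreover have "FF f r1 r2 b y z v \<le> FF f r1 r2 a y z v" using a b by blast
    ultimately have "(r1 - Lx)/2 * (norm (b - a))^2 \<le> 0" by linarith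
    moreover have "r1 - Lx > 0" using r by simp
    ultimately have "(norm (b - a))^2 \<le> 0" by (simp add: mult_le_0_iff)
    then show ?thesis by simp
  qed
  have "?P (THE x. ?P x)" using theI[of ?P a, OF a uniq] .
  then show ?thesis unfolding xopt_def .
qed

lemma xopt_FO:
  assumes y: "y \<in> Y" and q: "q \<in> X"
  shows "0 \<le> Fx gx r1 (xopt f r1 r2 X y z v) y z \<bullet> (q - xopt f r1 r2 X y z v)"
  using min_FO_x[OF y _ _ q] xopt_spec[OF y] by blast

lemma yopt_spec:
  assumes x: "x \<in> X"
  shows "yopt f r1 r2 Y x z v \<in> Y \<and> (\<forall>y'\<in>Y. FF f r1 r2 x y' z v \<le> FF f r1 r2 x (yopt f r1 r2 Y x z v) z v)"
proof -
  let ?P = "\<lambda>y. y \<in> Y \<and> (\<forall>y'\<in>Y. FF f r1 r2 x y' z v \<le> FF f r1 r2 x y z v)"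
  obtain a where a: "?P a" using continuous_attains_sup[OF Y(3) Y(1) FF_cont_y] by blast
  have uniq: "b = a" if b: "?P b" for b
  proof -
    have "FF f r1 r2 x b z v \<le> FF f r1 r2 x a z v + Fy gy r2 x a v \<bullet> (b - a) - (r2 - Ly)/2 * (norm (b - a))^2"
      by (rule FFy(1)) (use a b x in simp_all)
    moreover have "Fy gy r2 x a v \<bullet> (b - a) \<le> 0" using max_FO_y[OF x, of a z v b] a b by blast
    moreover have "FF f r1 r2 x b z v \<ge> FF f r1 r2 x a z v" using a b by blast
    ultimately have "(r2 - Ly)/2 * (norm (b - a))^2 \<le> 0" by linarith
    moreover have "r2 - Ly > 0" using r by simp
    ultimately have "(norm (b - a))^2 \<le> 0" by (simp add: mult_le_0_iff)
    then show ?thesis by simp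
  qed
  have "?P (THE y. ?P y)" using theI[of ?P a, OF a uniq] .
  then show ?thesis unfolding yopt_def .
qed

lemma yopt_FO:
  assumes x: "x \<in> X" and q: "q \<in> Y"
  shows "Fy gy r2 x (yopt f r1 r2 Y x z v) v \<bullet> (q - yopt f r1 r2 Y x z v) \<le> 0"
  using max_FO_y[OF x _ _ q] yopt_spec[OF x] by blast

abbreviation xo where "xo y z v \<equiv> xopt f r1 r2 X y z v"
abbreviation G where "G y z v \<equiv> Fy gy r2 (xo y z v) y v"

lemma xo_in: "y \<in> Y \<Longrightarrow> xo y z v \<in> X"
  using xopt_spec by blast

lemma xo_min: "y \<in> Y \<Longrightarrow> x' \<in> X \<Longrightarrow> FF f r1 r2 (xo y z v) y z v \<le> FF f r1 r2 x' y z v"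
  using xopt_spec by blast

lemma xo_sc:
  assumes y: "y \<in> Y" and b: "b \<in> X"
  shows "FF f r1 r2 b y z v \<ge> FF f r1 r2 (xo y z v) y z v + (r1 - Lx)/2 * (norm (b - xo y z v))^2"
proof -
  have "FF f r1 r2 b y z v \<ge> FF f r1 r2 (xo y z v) y z v + Fx gx r1 (xo y z v) y z \<bullet> (b - xo y z v) + (r1 - Lx)/2 * (norm (b - xo y z v))^2"
    by (rule FFx(2)[OF xo_in[OF y] b y])
  moreover have "0 \<le> Fx gx r1 (xo y z v) y z \<bullet> (b - xo y z v)" by (rule xopt_FO[OF y b])
  ultimately show ?thesis by linarith
qed

lemma xo_lip:
  assumes y1: "y1 \<in> Y" and y2: "y2 \<in> Y"
  shows "(r1 - Lx) * norm (xo y1 z v - xo y2 z v) \<le> Ly * norm (y1 - y2)"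
proof -
  define a where "a = xo y1 z v"
  define b where "b = xo y2 z v"
  have aX: "a \<in> X" and bX: "b \<in> X" unfolding a_def b_def using xo_in y1 y2 by auto
  define N where "N = norm (a - b)"
  have S1: "FF f r1 r2 b y1 z v \<ge> FF f r1 r2 a y1 z v + (r1 - Lx)/2 * N^2"
    using xo_sc[OF y1 bX, of z v] unfolding a_def N_def by (simp add: norm_minus_commute)
  have S2: "FF f r1 r2 a y2 z v \<ge> FF f r1 r2 b y2 z v + (r1 - Lx)/2 * N^2"
    using xo_sc[OF y2 aX, of z v] unfolding b_def N_def by simp
  have der: "((\<lambda>y. f b y - f a y) has_derivative (\<lambda>h. (gy b y - gy a y) \<bullet> h)) (at y)" for y
  proof -
    have "((\<lambda>y. f b y - f a y) has_derivative (\<lambda>h. gy b y \<bullet> h - gy a y \<bullet> h)) (at y)"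
      by (rule has_derivative_diff[OF dy dy])
    then show ?thesis by (simp add: inner_diff_left)
  qed
  have M: "(f b y1 - f a y1) - (f b y2 - f a y2) \<le> (Ly * N) * norm (y1 - y2)"
  proof (rule mvt_bound[where \<phi>="\<lambda>y. f b y - f a y" and g="\<lambda>y. gy b y - gy a y", OF der Y(2) y2 y1])
    fix p assume "p \<in> Y"
    then show "norm (gy b p - gy a p) \<le> Ly * N"
      using Lip_y[OF bX aX, of p p] unfolding N_def by (simp add: norm_minus_commute)
  qed
  have "(r1 - Lx) * N^2 \<le> (f b y1 - f a y1) - (f b y2 - f a y2)"
    using S1 S2 unfolding FF_def by (simp add: algebra_simps add_divide_distrib diff_divide_distrib)
  then have key: "N * ((r1 - Lx) * N) \<le> N * (Ly * norm (y1 - y2))"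
    using M by (simp add: power2_eq_square algebra_simps)
  have "(r1 - Lx) * N \<le> Ly * norm (y1 - y2)"
  proof (cases "N = 0")
    case True then show ?thesis using Lpos by simp
  next
    case False then have "N > 0" unfolding N_def by simp
    then show ?thesis using key by simp
  qed
  then show ?thesis unfolding N_def a_def b_def .
qed

lemma xo_lip':
  assumes y1: "y1 \<in> Y" and y2: "y2 \<in> Y"
  shows "norm (xo y1 z v - xo y2 z v) \<le> Ly / (r1 - Lx) * norm (y1 - y2)"
proof -
  have "r1 - Lx > 0" using r by simp
  then show ?thesis using xo_lip[OF y1 y2, of z v] by (simp add: pos_le_divide_eq mult.commute)
qed

lemma d_eq:
  assumes y: "y \<in> Y"
  shows "dfun f r1 r2 X y z v = FF f r1 r2 (xo y z v) y z v"
proof -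
  have bdd: "bdd_below ((\<lambda>x. FF f r1 r2 x y z v) ` X)"
    by (rule bdd_belowI2[of X "FF f r1 r2 (xo y z v) y z v"]) (rule xo_min[OF y])
  show ?thesis unfolding dfun_def
  proof (rule antisym)
    show "(INF x\<in>X. FF f r1 r2 x y z v) \<le> FF f r1 r2 (xo y z v) y z v"
      by (rule cINF_lower[OF bdd xo_in[OF y]])
    show "FF f r1 r2 (xo y z v) y z v \<le> (INF x\<in>X. FF f r1 r2 x y z v)"
      by (rule cINF_greatest[OF X(1)]) (rule xo_min[OF y])
  qed
qed

lemma d_upper:
  assumes y: "y \<in> Y" and y': "y' \<in> Y"
  shows "dfun f r1 r2 X y' z v \<le> dfun f r1 r2 X y z v + G y z v \<bullet> (y' - y) - (r2 - Ly)/2 * (norm (y' - y))^2"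
proof -
  have "dfun f r1 r2 X y' z v = FF f r1 r2 (xo y' z v) y' z v" by (rule d_eq[OF y'])
  also have "\<dots> \<le> FF f r1 r2 (xo y z v) y' z v" by (rule xo_min[OF y' xo_in[OF y]])
  also have "\<dots> \<le> FF f r1 r2 (xo y z v) y z v + G y z v \<bullet> (y' - y) - (r2 - Ly)/2 * (norm (y' - y))^2"
    by (rule FFy(1)[OF xo_in[OF y] y y'])
  finally show ?thesis using d_eq[OF y, of z v] by simp
qed

definition "Kd = (r2 + Ly)/2 + Ly * Ly / (r1 - Lx)"

lemma d_lower:
  assumes y: "y \<in> Y" and y': "y' \<in> Y"
  shows "dfun f r1 r2 X y' z v \<ge> dfun f r1 r2 X y z v + G y z v \<bullet> (y' - y) - Kd * (norm (y' - y))^2"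
proof -
  define a where "a = xo y z v"
  define a' where "a' = xo y' z v"
  define h where "h = y' - y"
  have aX: "a \<in> X" and a'X: "a' \<in> X" unfolding a_def a'_def using xo_in y y' by auto
  have A: "FF f r1 r2 a' y' z v \<ge> FF f r1 r2 a' y z v + Fy gy r2 a' y v \<bullet> h - (r2 + Ly)/2 * (norm h)^2"
    unfolding h_def by (rule FFy(2)[OF a'X y y'])
  have B: "FF f r1 r2 a' y z v \<ge> FF f r1 r2 a y z v" unfolding a_def by (rule xo_min[OF y a'X])
  have C: "Fy gy r2 a' y v \<bullet> h - G y z v \<bullet> h \<ge> - (Ly * Ly / (r1 - Lx) * (norm h)^2)"
  proof -
    have "Fy gy r2 a' y v \<bullet> h - G y z v \<bullet> h = (gy a' y - gy a y) \<bullet> h"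
      unfolding Fy_def a_def by (simp add: inner_diff_left)
    moreover have "\<bar>(gy a' y - gy a y) \<bullet> h\<bar> \<le> norm (gy a' y - gy a y) * norm h"
      by (rule Cauchy_Schwarz_ineq2)
    moreover have "norm (gy a' y - gy a y) \<le> Ly * norm (a' - a)"
      using Lip_y[OF a'X aX y y] by simp
    moreover have "norm (a' - a) \<le> Ly / (r1 - Lx) * norm h"
      unfolding a'_def a_def h_def by (rule xo_lip'[OF y' y])
    moreover have "Ly * norm (a' - a) \<le> Ly * (Ly / (r1 - Lx) * norm h)"
      using mult_left_mono[OF calculation(4), of Ly] Lpos by simp
    ultimately have "\<bar>Fy gy r2 a' y v \<bullet> h - G y z v \<bullet> h\<bar> \<le> Ly * (Ly / (r1 - Lx) * norm h) * norm h"
      by (smt (verit) mult_right_mono norm_ge_zero)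
    then show ?thesis by (simp add: power2_eq_square abs_le_iff mult_ac)
  qed
  have "dfun f r1 r2 X y' z v = FF f r1 r2 a' y' z v" unfolding a'_def by (rule d_eq[OF y'])
  moreover have "dfun f r1 r2 X y z v = FF f r1 r2 a y z v" unfolding a_def by (rule d_eq[OF y])
  ultimately show ?thesis using A B C unfolding Kd_def h_def by (simp add: algebra_simps add_divide_distrib)
qed

lemma G_lip:
  assumes y1: "y1 \<in> Y" and y2: "y2 \<in> Y"
  shows "norm (G y1 z v - G y2 z v) \<le> (Ly * (Ly / (r1 - Lx)) + Ly + r2) * norm (y1 - y2)"
proof -
  define a where "a = xo y1 z v"
  define b where "b = xo y2 z v"
  have aX: "a \<in> X" and bX: "b \<in> X" unfolding a_def b_def using xo_in y1 y2 by auto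
  have "G y1 z v - G y2 z v = (gy a y1 - gy b y2) - r2 *\<^sub>R (y1 - y2)"
    unfolding Fy_def a_def b_def by (simp add: algebra_simps)
  then have "norm (G y1 z v - G y2 z v) \<le> norm (gy a y1 - gy b y2) + r2 * norm (y1 - y2)"
    using norm_triangle_ineq4[of "gy a y1 - gy b y2" "r2 *\<^sub>R (y1 - y2)"] r Lpos by simp
  also have "\<dots> \<le> Ly * (norm (a - b) + norm (y1 - y2)) + r2 * norm (y1 - y2)"
    using Lip_y[OF aX bX y1 y2] by simp
  also have "\<dots> \<le> Ly * (Ly / (r1 - Lx) * norm (y1 - y2) + norm (y1 - y2)) + r2 * norm (y1 - y2)"
    using xo_lip'[OF y1 y2, of z v] Lpos unfolding a_def b_def by (simp add: mult_left_mono)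
  also have "\<dots> = (Ly * (Ly / (r1 - Lx)) + Ly + r2) * norm (y1 - y2)" by (simp add: algebra_simps)
  finally show ?thesis .
qed

lemma G_mono:
  assumes y1: "y1 \<in> Y" and y2: "y2 \<in> Y"
  shows "(G y1 z v - G y2 z v) \<bullet> (y1 - y2) \<le> - ((r2 - Ly) * (norm (y1 - y2))^2)"
proof -
  have A: "dfun f r1 r2 X y2 z v \<le> dfun f r1 r2 X y1 z v + G y1 z v \<bullet> (y2 - y1) - (r2 - Ly)/2 * (norm (y2 - y1))^2"
    by (rule d_upper[OF y1 y2])
  have B: "dfun f r1 r2 X y1 z v \<le> dfun f r1 r2 X y2 z v + G y2 z v \<bullet> (y1 - y2) - (r2 - Ly)/2 * (norm (y1 - y2))^2"
    by (rule d_upper[OF y2 y1])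
  have C: "G y1 z v \<bullet> (y2 - y1) = - (G y1 z v \<bullet> (y1 - y2))"
    by (metis inner_minus_right minus_diff_eq)
  have D: "norm (y2 - y1) = norm (y1 - y2)" by (rule norm_minus_commute)
  show ?thesis using A B C D by (simp add: inner_diff_left algebra_simps add_divide_distrib diff_divide_distrib)
qed

lemma xo_cont: "continuous_on Y (\<lambda>y. xo y z v)"
proof -
  have "(Ly / (r1 - Lx))-lipschitz_on Y (\<lambda>y. xo y z v)"
  proof (rule lipschitz_onI)
    fix y1 y2 assume "y1 \<in> Y" "y2 \<in> Y"
    then show "dist (xo y1 z v) (xo y2 z v) \<le> Ly / (r1 - Lx) * dist y1 y2"
      using xo_lip' by (simp add: dist_norm)
  next
    show "0 \<le> Ly / (r1 - Lx)" using r Lpos by simp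
  qed
  then show ?thesis by (rule lipschitz_on_continuous_on)
qed

lemma d_cont: "continuous_on Y (\<lambda>y. dfun f r1 r2 X y z v)"
proof -
  have c1: "continuous_on Y (\<lambda>y. (\<lambda>p. f (fst p) (snd p)) (xo y z v, y))"
    by (rule continuous_on_compose2[OF fcont continuous_on_Pair[OF xo_cont continuous_on_id]]) simp
  have c2: "continuous_on Y (\<lambda>y. f (xo y z v) y)" using c1 by simp
  have "continuous_on Y (\<lambda>y. FF f r1 r2 (xo y z v) y z v)" unfolding FF_def
    by (intro continuous_on_diff continuous_on_add continuous_on_mult continuous_on_const c2
        continuous_on_power continuous_on_norm continuous_on_id xo_cont)
  then show ?thesis by (rule continuous_on_cong[THEN iffD1, rotated 2]) (simp_all add: d_eq)
qed

lemma max_FO_d: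
  assumes a: "a \<in> Y" and m: "\<forall>y'\<in>Y. dfun f r1 r2 X y' z v \<le> dfun f r1 r2 X a z v"
    and q: "q \<in> Y"
  shows "G a z v \<bullet> (q - a) \<le> 0"
proof -
  have "0 \<le> - (G a z v \<bullet> (q - a))"
  proof (rule first_order[where C = "Kd * (norm (q - a))^2"])
    fix s :: real assume s: "0 < s" "s \<le> 1"
    have mem: "a + s *\<^sub>R (q - a) \<in> Y" using seg_mem[OF Y(2) a q] s by simp
    have A: "dfun f r1 r2 X a z v \<ge> dfun f r1 r2 X (a + s *\<^sub>R (q - a)) z v" using m mem by blast
    have B: "dfun f r1 r2 X (a + s *\<^sub>R (q - a)) z v \<ge> dfun f r1 r2 X a z v + G a z v \<bullet> (s *\<^sub>R (q - a)) - Kd * (norm (s *\<^sub>R (q - a)))^2"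
      using d_lower[OF a mem, of z v] by simp
    have C: "G a z v \<bullet> (s *\<^sub>R (q - a)) - Kd * (norm (s *\<^sub>R (q - a)))^2
        = s * (G a z v \<bullet> (q - a)) - Kd * (s^2 * (norm (q - a))^2)"
      using s by (simp add: power_mult_distrib)
    have "0 \<le> s * - (G a z v \<bullet> (q - a)) + Kd * (s^2 * (norm (q - a))^2)" using A B C by linarith
    then show "0 \<le> s * - (G a z v \<bullet> (q - a)) + Kd * (norm (q - a))\<^sup>2 * s\<^sup>2"
      by (simp add: mult_ac)
  qed
  then show ?thesis by simp
qed

lemma yzv_spec:
  "yzv f r1 r2 X Y z v \<in> Y \<and> (\<forall>y'\<in>Y. dfun f r1 r2 X y' z v \<le> dfun f r1 r2 X (yzv f r1 r2 X Y z v) z v)"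
proof -
  let ?P = "\<lambda>y. y \<in> Y \<and> (\<forall>y'\<in>Y. dfun f r1 r2 X y' z v \<le> dfun f r1 r2 X y z v)"
  obtain a where a: "?P a" using continuous_attains_sup[OF Y(3) Y(1) d_cont] by blast
  have uniq: "b = a" if b: "?P b" for b
  proof -
    have "dfun f r1 r2 X b z v \<le> dfun f r1 r2 X a z v + G a z v \<bullet> (b - a) - (r2 - Ly)/2 * (norm (b - a))^2"
      by (rule d_upper) (use a b in simp_all)
    moreover have "G a z v \<bullet> (b - a) \<le> 0" using max_FO_d[of a z v b] a b by blast
    moreover have "dfun f r1 r2 X b z v \<ge> dfun f r1 r2 X a z v" using a b by blast
    ultimately have "(r2 - Ly)/2 * (norm (b - a))^2 \<le> 0" by linarith
    moreover have "r2 - Ly > 0" using r by simp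
    ultimately have "(norm (b - a))^2 \<le> 0" by (simp add: mult_le_0_iff)
    then show ?thesis by simp
  qed
  have "?P (THE y. ?P y)" using theI[of ?P a, OF a uniq] .
  then show ?thesis unfolding yzv_def .
qed

lemma yzv_FO:
  assumes q: "q \<in> Y"
  shows "G (yzv f r1 r2 X Y z v) z v \<bullet> (q - yzv f r1 r2 X Y z v) \<le> 0"
  using max_FO_d[OF _ _ q] yzv_spec by blast

lemma Fx_mono:
  assumes "a \<in> X" "b \<in> X" "y \<in> Y"
  shows "(Fx gx r1 a y z - Fx gx r1 b y z) \<bullet> (a - b) \<ge> (r1 - Lx) * (norm (a - b))^2"
proof -
  have e: "(Fx gx r1 a y z - Fx gx r1 b y z) \<bullet> (a - b) = (gx a y - gx b y) \<bullet> (a - b) + r1 * (norm (a - b))^2"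
    unfolding Fx_def by (simp add: inner_add_left inner_diff_left power2_norm_eq_inner algebra_simps)
  have "\<bar>(gx a y - gx b y) \<bullet> (a - b)\<bar> \<le> norm (gx a y - gx b y) * norm (a - b)" by (rule Cauchy_Schwarz_ineq2)
  also have "\<dots> \<le> (Lx * norm (a - b)) * norm (a - b)"
    using Lip_x[OF assms(1,2,3,3)] by (simp add: mult_right_mono)
  finally show ?thesis unfolding e by (simp add: power2_eq_square algebra_simps abs_le_iff)
qed

lemma Fx_lip:
  assumes "a \<in> X" "b \<in> X" "y \<in> Y"
  shows "norm (Fx gx r1 a y z - Fx gx r1 b y z) \<le> (r1 + Lx) * norm (a - b)"
proof -
  have "Fx gx r1 a y z - Fx gx r1 b y z = (gx a y - gx b y) + r1 *\<^sub>R (a - b)"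
    unfolding Fx_def by (simp add: algebra_simps)
  then have "norm (Fx gx r1 a y z - Fx gx r1 b y z) \<le> norm (gx a y - gx b y) + r1 * norm (a - b)"
    using norm_triangle_ineq[of "gx a y - gx b y" "r1 *\<^sub>R (a - b)"] r Lpos by simp
  also have "\<dots> \<le> Lx * norm (a - b) + r1 * norm (a - b)" using Lip_x[OF assms(1,2,3,3)] by simp
  finally show ?thesis by (simp add: algebra_simps)
qed

lemma Fy_mono:
  assumes "a \<in> Y" "b \<in> Y" "x \<in> X"
  shows "((- Fy gy r2 x a v) - (- Fy gy r2 x b v)) \<bullet> (a - b) \<ge> (r2 - Ly) * (norm (a - b))^2"
proof -
  have e: "((- Fy gy r2 x a v) - (- Fy gy r2 x b v)) \<bullet> (a - b) = r2 * (norm (a - b))^2 - (gy x a - gy x b) \<bullet> (a - b)"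
    unfolding Fy_def by (simp add: inner_add_left inner_diff_left power2_norm_eq_inner algebra_simps)
  have "\<bar>(gy x a - gy x b) \<bullet> (a - b)\<bar> \<le> norm (gy x a - gy x b) * norm (a - b)" by (rule Cauchy_Schwarz_ineq2)
  also have "\<dots> \<le> (Ly * norm (a - b)) * norm (a - b)"
    using Lip_y[OF assms(3,3,1,2)] by (simp add: mult_right_mono)
  finally show ?thesis unfolding e by (simp add: power2_eq_square algebra_simps abs_le_iff)
qed

lemma Fy_lip:
  assumes "a \<in> Y" "b \<in> Y" "x \<in> X"
  shows "norm ((- Fy gy r2 x a v) - (- Fy gy r2 x b v)) \<le> (r2 + Ly) * norm (a - b)"
proof -
  have "(- Fy gy r2 x a v) - (- Fy gy r2 x b v) = r2 *\<^sub>R (a - b) - (gy x a - gy x b)"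
    unfolding Fy_def by (simp add: algebra_simps)
  then have "norm ((- Fy gy r2 x a v) - (- Fy gy r2 x b v)) \<le> r2 * norm (a - b) + norm (gy x a - gy x b)"
    using norm_triangle_ineq4[of "r2 *\<^sub>R (a - b)" "gy x a - gy x b"] r Lpos by simp
  also have "\<dots> \<le> r2 * norm (a - b) + Ly * norm (a - b)" using Lip_y[OF assms(3,3,1,2)] by simp
  finally show ?thesis by (simp add: algebra_simps)
qed

end

theorem lemma4:
  fixes f :: "'a::euclidean_space \<Rightarrow> 'b::euclidean_space \<Rightarrow> real"
    and gx :: "'a \<Rightarrow> 'b \<Rightarrow> 'a" and gy :: "'a \<Rightarrow> 'b \<Rightarrow> 'b"
    and X :: "'a set" and Y :: "'b set"
    and Lx Ly r1 r2 c \<alpha> \<beta> \<mu> :: real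
    and x z :: "nat \<Rightarrow> 'a" and y v :: "nat \<Rightarrow> 'b"
  assumes X: "X \<noteq> {}" "convex X" "compact X"
    and Y: "Y \<noteq> {}" "convex Y" "compact Y"
    and grad: "\<And>a b. ((\<lambda>p. f (fst p) (snd p)) has_derivative
                  (\<lambda>h. gx a b \<bullet> fst h + gy a b \<bullet> snd h)) (at (a, b))"
    and cont_gx: "continuous_on UNIV (\<lambda>p. gx (fst p) (snd p))"
    and cont_gy: "continuous_on UNIV (\<lambda>p. gy (fst p) (snd p))"
    and Lpos: "Lx > 0" "Ly > 0"
    and Lip_x: "\<And>a a' b b'. a \<in> X \<Longrightarrow> a' \<in> X \<Longrightarrow> b \<in> Y \<Longrightarrow> b' \<in> Y \<Longrightarrow>
                 norm (gx a b - gx a' b') \<le> Lx * (norm (a - a') + norm (b - b'))"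
    and Lip_y: "\<And>a a' b b'. a \<in> X \<Longrightarrow> a' \<in> X \<Longrightarrow> b \<in> Y \<Longrightarrow> b' \<in> Y \<Longrightarrow>
                 norm (gy a b - gy a' b') \<le> Ly * (norm (a - a') + norm (b - b'))"
    and r: "r1 > Lx" "r2 > Ly"
    and step: "c > 0" "\<alpha> > 0" "0 < \<beta>" "\<beta> < 1" "0 < \<mu>" "\<mu> < 1"
    and init: "x 0 \<in> X" "y 0 \<in> Y"
    and upd_x: "\<And>t. x (Suc t) = closest_point X
                 (x t - c *\<^sub>R (gx (x t) (y t) + r1 *\<^sub>R (x t - z t)))"
    and upd_y: "\<And>t. y (Suc t) = closest_point Y
                 (y t + \<alpha> *\<^sub>R (gy (x (Suc t)) (y t) - r2 *\<^sub>R (y t - v t)))"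
    and upd_z: "\<And>t. z (Suc t) = z t + \<beta> *\<^sub>R (x (Suc t) - z t)"
    and upd_v: "\<And>t. v (Suc t) = v t + \<mu> *\<^sub>R (y (Suc t) - v t)"
  defines "\<sigma>6 \<equiv> (2 * c * r1 + 1) / (c * r1 - c * Lx)"
    and "\<sigma>7 \<equiv> (2 * \<alpha> * r2 + 1) / (\<alpha> * r2 - \<alpha> * Ly)"
    and "\<sigma>8 \<equiv> (1 + \<alpha> * (Ly * ((Ly + r1 - Lx) / (r1 - Lx)) + Ly + r2)) / (\<alpha> * (r2 - Ly))"
    and "yplus \<equiv> \<lambda>t. closest_point Y
           (y t + \<alpha> *\<^sub>R (gy (xopt f r1 r2 X (y t) (z t) (v t)) (y t) - r2 *\<^sub>R (y t - v t)))"
  shows "\<forall>t.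
     norm (x (Suc t) - xopt f r1 r2 X (y t) (z t) (v t)) \<le> \<sigma>6 * norm (x (Suc t) - x t)
   \<and> norm (y (Suc t) - yopt f r1 r2 Y (x (Suc t)) (z t) (v t)) \<le> \<sigma>7 * norm (y (Suc t) - y t)
   \<and> norm (yzv f r1 r2 X Y (z t) (v t) - y t) \<le> \<sigma>8 * norm (y t - yplus t)
   \<and> norm (y (Suc t) - yplus t) \<le> Ly * \<alpha> * \<sigma>6 * norm (x t - x (Suc t))"
proof -
  interpret S: setting f gx gy X Y Lx Ly r1 r2
    using X Y grad Lpos Lip_x Lip_y r by unfold_locales auto
  have s6: "\<sigma>6 = (2 * c * r1 + 1) / (c * r1 - c * Lx)" using assms(28) by simp
  have s7: "\<sigma>7 = (2 * \<alpha> * r2 + 1) / (\<alpha> * r2 - \<alpha> * Ly)" using assms(29) by simp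
  have s8: "\<sigma>8 = (1 + \<alpha> * (Ly * ((Ly + r1 - Lx) / (r1 - Lx)) + Ly + r2)) / (\<alpha> * (r2 - Ly))" using assms(30) by simp
  have yp: "yplus t = closest_point Y
           (y t + \<alpha> *\<^sub>R (gy (xopt f r1 r2 X (y t) (z t) (v t)) (y t) - r2 *\<^sub>R (y t - v t)))" for t
    using assms(31) by simp
  have cX: "closed X" using X(3) compact_imp_closed by blast
  have cY: "closed Y" using Y(3) compact_imp_closed by blast
  have xin: "x t \<in> X" for t
    by (cases t) (simp_all add: init upd_x closest_point_in_set[OF cX X(1)])
  have yin: "y t \<in> Y" for t
    by (cases t) (simp_all add: init upd_y closest_point_in_set[OF cY Y(1)])
  have rx: "r1 - Lx > 0" and ry: "r2 - Ly > 0" using r by auto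
  show ?thesis
  proof (intro allI conjI)
    fix t
    define xs where "xs = xopt f r1 r2 X (y t) (z t) (v t)"
    have xsX: "xs \<in> X" unfolding xs_def by (rule S.xo_in[OF yin])
    have i0: "norm (x (Suc t) - xs) \<le> (c * (r1 + Lx) + 1) / (c * (r1 - Lx)) * norm (x (Suc t) - x t)"
    proof (rule EB(1)[where H = "\<lambda>a. Fx gx r1 a (y t) (z t)" and S = X])
      show "convex X" "closed X" "xs \<in> X" "x t \<in> X" "c > 0" "r1 - Lx > 0" "0 \<le> r1 + Lx"
        using X cX xsX xin step rx Lpos r by auto
      show "\<And>q. q \<in> X \<Longrightarrow> 0 \<le> Fx gx r1 xs (y t) (z t) \<bullet> (q - xs)"
        unfolding xs_def by (rule S.xopt_FO[OF yin])
      show "\<And>a b. a \<in> X \<Longrightarrow> b \<in> X \<Longrightarrow> (r1 - Lx) * (norm (a - b))^2 \<le> (Fx gx r1 a (y t) (z t) - Fx gx r1 b (y t) (z t)) \<bullet> (a - b)"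
        by (rule S.Fx_mono[OF _ _ yin])
      show "\<And>a b. a \<in> X \<Longrightarrow> b \<in> X \<Longrightarrow> norm (Fx gx r1 a (y t) (z t) - Fx gx r1 b (y t) (z t)) \<le> (r1 + Lx) * norm (a - b)"
        by (rule S.Fx_lip[OF _ _ yin])
      show "x (Suc t) = closest_point X (x t - c *\<^sub>R Fx gx r1 (x t) (y t) (z t))"
        unfolding Fx_def by (rule upd_x)
    qed
    have c6: "(c * (r1 + Lx) + 1) / (c * (r1 - Lx)) \<le> \<sigma>6"
    proof -
      have "c * (r1 + Lx) + 1 \<le> 2 * c * r1 + 1" using step r Lpos by (simp add: algebra_simps)
      moreover have "c * (r1 - Lx) > 0" using step rx by simp
      ultimately show ?thesis unfolding s6 by (simp add: divide_right_mono algebra_simps)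
    qed
    have i1: "norm (x (Suc t) - xs) \<le> \<sigma>6 * norm (x (Suc t) - x t)"
      using i0 c6 mult_right_mono[OF c6 norm_ge_zero[of "x (Suc t) - x t"]] by linarith
    then show "norm (x (Suc t) - xopt f r1 r2 X (y t) (z t) (v t)) \<le> \<sigma>6 * norm (x (Suc t) - x t)"
      unfolding xs_def .
    define ys where "ys = yopt f r1 r2 Y (x (Suc t)) (z t) (v t)"
    have ysY: "ys \<in> Y" unfolding ys_def using S.yopt_spec[OF xin] by blast
    have ii0: "norm (y (Suc t) - ys) \<le> (\<alpha> * (r2 + Ly) + 1) / (\<alpha> * (r2 - Ly)) * norm (y (Suc t) - y t)"
    proof (rule EB(1)[where H = "\<lambda>b. - Fy gy r2 (x (Suc t)) b (v t)" and S = Y])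
      show "convex Y" "closed Y" "ys \<in> Y" "y t \<in> Y" "\<alpha> > 0" "r2 - Ly > 0" "0 \<le> r2 + Ly"
        using Y cY ysY yin step ry Lpos r by auto
      show "\<And>q. q \<in> Y \<Longrightarrow> 0 \<le> - Fy gy r2 (x (Suc t)) ys (v t) \<bullet> (q - ys)"
        unfolding ys_def using S.yopt_FO[OF xin] by simp
      show "\<And>a b. a \<in> Y \<Longrightarrow> b \<in> Y \<Longrightarrow> (r2 - Ly) * (norm (a - b))^2 \<le> (- Fy gy r2 (x (Suc t)) a (v t) - - Fy gy r2 (x (Suc t)) b (v t)) \<bullet> (a - b)"
        by (rule S.Fy_mono[OF _ _ xin])
      show "\<And>a b. a \<in> Y \<Longrightarrow> b \<in> Y \<Longrightarrow> norm (- Fy gy r2 (x (Suc t)) a (v t) - - Fy gy r2 (x (Suc t)) b (v t)) \<le> (r2 + Ly) * norm (a - b)"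
        by (rule S.Fy_lip[OF _ _ xin])
      show "y (Suc t) = closest_point Y (y t - \<alpha> *\<^sub>R - Fy gy r2 (x (Suc t)) (y t) (v t))"
        unfolding Fy_def upd_y by (rule arg_cong[where f="closest_point Y"]) (simp add: algebra_simps)
    qed
    have c7: "(\<alpha> * (r2 + Ly) + 1) / (\<alpha> * (r2 - Ly)) \<le> \<sigma>7"
    proof -
      have "\<alpha> * (r2 + Ly) + 1 \<le> 2 * \<alpha> * r2 + 1" using step r Lpos by (simp add: algebra_simps)
      moreover have "\<alpha> * (r2 - Ly) > 0" using step ry by simp
      ultimately show ?thesis unfolding s7 by (simp add: divide_right_mono algebra_simps)
    qed
    show "norm (y (Suc t) - yopt f r1 r2 Y (x (Suc t)) (z t) (v t)) \<le> \<sigma>7 * norm (y (Suc t) - y t)"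
      using ii0 mult_right_mono[OF c7 norm_ge_zero[of "y (Suc t) - y t"]] unfolding ys_def by linarith
    define yz where "yz = yzv f r1 r2 X Y (z t) (v t)"
    have yzY: "yz \<in> Y" unfolding yz_def using S.yzv_spec by blast
    define LL where "LL = Ly * (Ly / (r1 - Lx)) + Ly + r2"
    have LL0: "0 \<le> LL" unfolding LL_def using rx Lpos r by simp
    have iii0: "norm (yz - y t) \<le> (1 + \<alpha> * LL) / (\<alpha> * (r2 - Ly)) * norm (y t - yplus t)"
    proof (rule EB(2)[where H = "\<lambda>b. - S.G b (z t) (v t)" and S = Y])
      show "convex Y" "closed Y" "yz \<in> Y" "y t \<in> Y" "\<alpha> > 0" "r2 - Ly > 0" "0 \<le> LL"
        using Y cY yzY yin step ry LL0 by auto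
      show "\<And>q. q \<in> Y \<Longrightarrow> 0 \<le> - S.G yz (z t) (v t) \<bullet> (q - yz)"
        unfolding yz_def using S.yzv_FO by simp
      show "\<And>a b. a \<in> Y \<Longrightarrow> b \<in> Y \<Longrightarrow> (r2 - Ly) * (norm (a - b))^2 \<le> (- S.G a (z t) (v t) - - S.G b (z t) (v t)) \<bullet> (a - b)"
      proof -
        fix a b assume "a \<in> Y" "b \<in> Y"
        from S.G_mono[OF this, of "z t" "v t"]
        show "(r2 - Ly) * (norm (a - b))^2 \<le> (- S.G a (z t) (v t) - - S.G b (z t) (v t)) \<bullet> (a - b)"
          by (simp add: inner_diff_left)
      qed
      show "\<And>a b. a \<in> Y \<Longrightarrow> b \<in> Y \<Longrightarrow> norm (- S.G a (z t) (v t) - - S.G b (z t) (v t)) \<le> LL * norm (a - b)"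
      proof -
        fix a b assume "a \<in> Y" "b \<in> Y"
        from S.G_lip[OF this, of "z t" "v t"]
        show "norm (- S.G a (z t) (v t) - - S.G b (z t) (v t)) \<le> LL * norm (a - b)"
          unfolding LL_def by (simp add: norm_minus_commute)
      qed
      show "yplus t = closest_point Y (y t - \<alpha> *\<^sub>R - S.G (y t) (z t) (v t))"
        unfolding yp Fy_def by (rule arg_cong[where f="closest_point Y"]) (simp add: algebra_simps)
    qed
    have c8: "(1 + \<alpha> * LL) / (\<alpha> * (r2 - Ly)) \<le> \<sigma>8"
    proof -
      have "Ly / (r1 - Lx) \<le> (Ly + r1 - Lx) / (r1 - Lx)" using rx by (simp add: divide_right_mono)
      then have "LL \<le> Ly * ((Ly + r1 - Lx) / (r1 - Lx)) + Ly + r2"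
        unfolding LL_def using mult_left_mono[OF \<open>Ly / (r1 - Lx) \<le> (Ly + r1 - Lx) / (r1 - Lx)\<close>, of Ly] Lpos
        by linarith
      then have "1 + \<alpha> * LL \<le> 1 + \<alpha> * (Ly * ((Ly + r1 - Lx) / (r1 - Lx)) + Ly + r2)"
        using step by (simp add: mult_left_mono)
      moreover have "\<alpha> * (r2 - Ly) > 0" using step ry by simp
      ultimately show ?thesis unfolding s8 by (simp add: divide_right_mono)
    qed
    show "norm (yzv f r1 r2 X Y (z t) (v t) - y t) \<le> \<sigma>8 * norm (y t - yplus t)"
      using iii0 mult_right_mono[OF c8 norm_ge_zero[of "y t - yplus t"]] unfolding yz_def by linarith
    have "norm (y (Suc t) - yplus t) \<le> norm ((y t + \<alpha> *\<^sub>R (gy (x (Suc t)) (y t) - r2 *\<^sub>R (y t - v t)))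
          - (y t + \<alpha> *\<^sub>R (gy xs (y t) - r2 *\<^sub>R (y t - v t))))"
      using closest_point_lipschitz[OF Y(2) cY Y(1)] unfolding upd_y yp xs_def dist_norm .
    also have "\<dots> = \<alpha> * norm (gy (x (Suc t)) (y t) - gy xs (y t))"
    proof -
      have "(y t + \<alpha> *\<^sub>R (gy (x (Suc t)) (y t) - r2 *\<^sub>R (y t - v t)))
          - (y t + \<alpha> *\<^sub>R (gy xs (y t) - r2 *\<^sub>R (y t - v t))) = \<alpha> *\<^sub>R (gy (x (Suc t)) (y t) - gy xs (y t))"
        by (simp add: algebra_simps)
      then show ?thesis using step by simp
    qed
    also have "\<dots> \<le> \<alpha> * (Ly * norm (x (Suc t) - xs))"
      using Lip_y[OF xin[of "Suc t"] xsX yin[of t] yin[of t]] step by (simp add: mult_left_mono)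
    also have "\<dots> \<le> \<alpha> * (Ly * (\<sigma>6 * norm (x (Suc t) - x t)))"
      using i1 step Lpos by (simp add: mult_left_mono)
    finally show "norm (y (Suc t) - yplus t) \<le> Ly * \<alpha> * \<sigma>6 * norm (x t - x (Suc t))"
      by (simp add: norm_minus_commute mult_ac)
  qed
qed

end
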